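(* Let $n\ge2$, $\alpha\in(-n,0)$ and let $\phi$ be a Young function satisfying $\underline\Lambda_\phi(\alpha)<\infty$ and $\overline\Lambda_\phi(\alpha)<\infty$. Assume $\Omega\subset\mathbb R^n$ is a bounded domain. Then there exists a constant $C>0$ depending on $n,\alpha,\Omega,\phi$ such that for all $x\in\Omega$ and $0<r<t<\frac12\operatorname{diam}\Omega$, $u_{x,r,t}\in\mathbf B^{\alpha,\phi}(\Omega)$ and $$\|u_{x,r,t}\|_{\mathbf B^{\alpha,\phi}(\Omega)}\le C(t-r)^{-\alpha}\Big[\phi^{-1}\Big(\frac{(t-r)^n}{|B_\Omega(x,t)|}\Big)\Big]^{-1}.$$
   Context: A Young function is $\phi\in C([0,\infty))$, convex, with $\phi(0)=0$, $\phi(t)>0$ for $t>0$, $\lim_{t\to\infty}\phi(t)=\infty$; $\phi^{-1}$ is its inverse on $[0,\infty)$. $\underline\Lambda_\phi(\alpha):=\sup_{x>0}\int_0^1\frac{\phi(t^{1-\alpha}x)}{\phi(x)}\frac{dt}{t^{n+1}}$, $\overline\Lambda_\phi(\alpha):=\sup_{x>0}\int_1^\infty\frac{\phi(t^{-\alpha}x)}{\phi(x)}\frac{dt}{t^{n+1}}$. $\|u\|_{\dot{\mathbf B}^{\alpha,\phi}(\Omega)}:=\inf\{\lambda>0:\int_\Omega\int_\Omega\phi(\frac{|u(x)-u(y)|}{\lambda|x-y|^{\alpha}})\frac{dx\,dy}{|x-y|^{2n}}\le1\}$, $\|u\|_{L^\phi(\Omega)}:=\inf\{\lambda>0:\int_\Omega\phi(|u|/\lambda)\,dx\le1\}$;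 $\mathbf B^{\alpha,\phi}(\Omega)$ is the set of measurable $u$ with both finite, normed by $\|u\|_{\mathbf B^{\alpha,\phi}(\Omega)}=\|u\|_{L^\phi(\Omega)}+\|u\|_{\dot{\mathbf B}^{\alpha,\phi}(\Omega)}$. $B_\Omega(x,s):=\Omega\cap B(x,s)$. For $x\in\Omega$, $0<r<t$, $u_{x,r,t}(z)=1$ on $B_\Omega(x,r)$, $=\frac{t-|x-z|}{t-r}$ on $B_\Omega(x,t)\setminus B_\Omega(x,r)$, $=0$ on $\Omega\setminus B_\Omega(x,t)$. *)

theory Defs
  imports "HOL-Analysis.Analysis"
begin

definition young_function :: "(real \<Rightarrow> real) \<Rightarrow> bool" where
  "young_function \<phi> \<longleftrightarrow>
     continuous_on {0..} \<phi> \<and> convex_on {0..} \<phi> \<and> \<phi> 0 = 0 \<and>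
     (\<forall>t>0. \<phi> t > 0) \<and> filterlim \<phi> at_top at_top"

definition phi_inv :: "(real \<Rightarrow> real) \<Rightarrow> real \<Rightarrow> real" where
  "phi_inv \<phi> s = (THE t. t \<ge> 0 \<and> \<phi> t = s)"

definition Lambda_lower :: "(real \<Rightarrow> real) \<Rightarrow> nat \<Rightarrow> real \<Rightarrow> ennreal" where
  "Lambda_lower \<phi> n \<alpha> = (SUP x\<in>{0<..}.
     \<integral>\<^sup>+ t\<in>{0<..1}. ennreal (\<phi> (t powr (1 - \<alpha>) * x) / \<phi> x / t ^ (n + 1)) \<partial>lborel)"

definition Lambda_upper :: "(real \<Rightarrow> real) \<Rightarrow> nat \<Rightarrow> real \<Rightarrow> ennreal" where
  "Lambda_upper \<phi> n \<alpha> = (SUP x\<in>{0<..}.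
     \<integral>\<^sup>+ t\<in>{1..}. ennreal (\<phi> (t powr (- \<alpha>) * x) / \<phi> x / t ^ (n + 1)) \<partial>lborel)"

definition besov_modular :: "'a::euclidean_space set \<Rightarrow> real \<Rightarrow> (real \<Rightarrow> real) \<Rightarrow> ('a \<Rightarrow> real) \<Rightarrow> real \<Rightarrow> ennreal" where
  "besov_modular \<Omega> \<alpha> \<phi> u lam =
     (\<integral>\<^sup>+ x\<in>\<Omega>. (\<integral>\<^sup>+ y\<in>\<Omega>.
        ennreal (\<phi> (\<bar>u x - u y\<bar> / (lam * norm (x - y) powr \<alpha>)) / norm (x - y) ^ (2 * DIM('a)))
      \<partial>lborel) \<partial>lborel)"

definition orlicz_modular :: "'a::euclidean_space set \<Rightarrow> (real \<Rightarrow> real) \<Rightarrow> ('a \<Rightarrow> real) \<Rightarrow> real \<Rightarrow> ennreal" where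
  "orlicz_modular \<Omega> \<phi> u lam = (\<integral>\<^sup>+ x\<in>\<Omega>. ennreal (\<phi> (\<bar>u x\<bar> / lam)) \<partial>lborel)"

definition besov_seminorm :: "'a::euclidean_space set \<Rightarrow> real \<Rightarrow> (real \<Rightarrow> real) \<Rightarrow> ('a \<Rightarrow> real) \<Rightarrow> real" where
  "besov_seminorm \<Omega> \<alpha> \<phi> u = Inf {lam. lam > 0 \<and> besov_modular \<Omega> \<alpha> \<phi> u lam \<le> 1}"

definition orlicz_norm :: "'a::euclidean_space set \<Rightarrow> (real \<Rightarrow> real) \<Rightarrow> ('a \<Rightarrow> real) \<Rightarrow> real" where
  "orlicz_norm \<Omega> \<phi> u = Inf {lam. lam > 0 \<and> orlicz_modular \<Omega> \<phi> u lam \<le> 1}"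

definition besov_norm :: "'a::euclidean_space set \<Rightarrow> real \<Rightarrow> (real \<Rightarrow> real) \<Rightarrow> ('a \<Rightarrow> real) \<Rightarrow> real" where
  "besov_norm \<Omega> \<alpha> \<phi> u = orlicz_norm \<Omega> \<phi> u + besov_seminorm \<Omega> \<alpha> \<phi> u"

text \<open>Membership in B^{alpha,phi}(Omega): measurable on Omega, both (Luxemburg) norms finite,
  i.e. the defining sets of admissible lambda are nonempty.\<close>
definition besov_space :: "'a::euclidean_space set \<Rightarrow> real \<Rightarrow> (real \<Rightarrow> real) \<Rightarrow> ('a \<Rightarrow> real) set" where
  "besov_space \<Omega> \<alpha> \<phi> = {u. u \<in> borel_measurable (lebesgue_on \<Omega>) \<and>
       (\<exists>lam>0. orlicz_modular \<Omega> \<phi> u lam \<le> 1) \<and> (\<exists>lam>0. besov_modular \<Omega> \<alpha> \<phi> u lam \<le> 1)}"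

text \<open>The cut-off function u_{x,r,t} (only its values on Omega matter).\<close>
definition cutoff :: "'a::euclidean_space \<Rightarrow> real \<Rightarrow> real \<Rightarrow> 'a \<Rightarrow> real" where
  "cutoff x r t z = (if dist x z < r then 1 else if dist x z < t then (t - dist x z) / (t - r) else 0)"

end

theory Submission
  imports Defs
begin




lemma yf_mono_strict:
  assumes "young_function \<phi>" "0 \<le> a" "a < b"
  shows "\<phi> a < \<phi> b"
proof -
  have cv: "convex_on {0..} \<phi>" and z: "\<phi> 0 = 0" and p: "\<phi> b > 0"
    using assms unfolding young_function_def by auto
  have "\<phi> ((1 - a/b) *\<^sub>R 0 + (a/b) *\<^sub>R b) \<le> (1 - a/b) * \<phi> 0 + (a/b) * \<phi> b"
    using assms by (intro convex_onD[OF cv]) auto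
  moreover have "(1 - a/b) *\<^sub>R 0 + (a/b) *\<^sub>R b = a" using assms by auto
  ultimately have "\<phi> a \<le> (a/b) * \<phi> b" using z by simp
  also have "\<dots> < \<phi> b" using assms p by (simp add: mult_less_cancel_right2 field_simps)
  finally show ?thesis .
qed

lemma yf_mono:
  assumes "young_function \<phi>" "0 \<le> a" "a \<le> b"
  shows "\<phi> a \<le> \<phi> b"
  using yf_mono_strict[OF assms(1,2), of b] assms(3) by (cases "a = b") auto

lemma yf_nonneg:
  assumes "young_function \<phi>" "0 \<le> a"
  shows "0 \<le> \<phi> a"
  using yf_mono[OF assms(1) order_refl assms(2)] assms(1) by (simp add: young_function_def)

lemma yf_scale:
  assumes "young_function \<phi>" "0 \<le> c" "c \<le> 1" "0 \<le> x"
  shows "\<phi> (c * x) \<le> c * \<phi> x"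
proof -
  have cv: "convex_on {0..} \<phi>" and z: "\<phi> 0 = 0"
    using assms unfolding young_function_def by auto
  have "\<phi> ((1 - c) *\<^sub>R 0 + c *\<^sub>R x) \<le> (1 - c) * \<phi> 0 + c * \<phi> x"
    using assms by (intro convex_onD[OF cv]) auto
  then show ?thesis using z by simp
qed

lemma phi_inv_prop:
  assumes "young_function \<phi>" "0 < v"
  shows "phi_inv \<phi> v > 0 \<and> \<phi> (phi_inv \<phi> v) = v"
proof -
  have ct: "continuous_on {0..} \<phi>" and z: "\<phi> 0 = 0" and lim: "filterlim \<phi> at_top at_top"
    using assms(1) unfolding young_function_def by blast+
  from lim have "eventually (\<lambda>x. \<phi> x \<ge> v) at_top" unfolding filterlim_at_top by blast
  then obtain b0 where b0: "\<And>x. x \<ge> b0 \<Longrightarrow> \<phi> x \<ge> v" unfolding eventually_at_top_linorder by blast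
  define b where "b = max 0 b0"
  have bv: "\<phi> b \<ge> v" using b0 by (simp add: b_def)
  have b0': "b \<ge> 0" by (simp add: b_def)
  have ctb: "continuous_on {0..b} \<phi>" by (rule continuous_on_subset[OF ct]) auto
  have "\<phi> 0 \<le> v" using z assms(2) by simp
  from IVT'[of \<phi> 0 v b, OF this bv b0' ctb]
  obtain y where y: "0 \<le> y" "y \<le> b" "\<phi> y = v" by blast
  have uniq: "t = y" if "t \<ge> 0" "\<phi> t = v" for t
  proof (rule ccontr)
    assume "t \<noteq> y"
    then consider "t < y" | "y < t" by linarith
    then show False
    proof cases
      case 1 then have "\<phi> t < \<phi> y" by (rule yf_mono_strict[OF assms(1) that(1)])
      then show False using that y by simp
    next
      case 2 then have "\<phi> y < \<phi> t" by (rule yf_mono_strict[OF assms(1) y(1)])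
      then show False using that y by simp
    qed
  qed
  have "phi_inv \<phi> v = y"
    unfolding phi_inv_def
  proof (rule the_equality)
    show "y \<ge> 0 \<and> \<phi> y = v" using y by simp
    show "t = y" if "t \<ge> 0 \<and> \<phi> t = v" for t using uniq that by blast
  qed
  moreover have "y \<noteq> 0" using y z assms(2) by auto
  ultimately show ?thesis using y by simp
qed



lemma cutoff_eq:
  assumes "r < t"
  shows "cutoff x r t z = max 0 (min 1 ((t - dist x z) / (t - r)))"
proof -
  have s: "t - r > 0" using assms by simp
  consider "dist x z < r" | "r \<le> dist x z" "dist x z < t" | "t \<le> dist x z" by linarith
  then show ?thesis
  proof cases
    case 1
    then have "(t - dist x z) / (t - r) \<ge> 1" using s by (simp add: field_simps)
    then show ?thesis using 1 unfolding cutoff_def by simp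
  next
    case 2
    then have "(t - dist x z) / (t - r) \<le> 1" "(t - dist x z) / (t - r) \<ge> 0" using s by (simp_all add: field_simps)
    then show ?thesis using 2 unfolding cutoff_def by simp
  next
    case 3
    then have "(t - dist x z) / (t - r) \<le> 0" using s by (simp add: divide_nonpos_pos)
    then show ?thesis using 3 assms unfolding cutoff_def by simp
  qed
qed

lemma clamp_lip:
  fixes p q :: real
  shows "\<bar>max 0 (min 1 p) - max 0 (min 1 q)\<bar> \<le> min 1 \<bar>p - q\<bar>"
  unfolding min_def max_def abs_le_iff by (simp split: if_splits, linarith)

lemma cutoff_lip:
  assumes "r < t"
  shows "\<bar>cutoff x r t a - cutoff x r t b\<bar> \<le> min 1 (dist a b / (t - r))"
proof -
  have s: "t - r > 0" using assms by simp
  have "\<bar>(t - dist x a) / (t - r) - (t - dist x b) / (t - r)\<bar> = \<bar>dist x b - dist x a\<bar> / (t - r)"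
    using s by (simp add: diff_divide_distrib[symmetric] abs_divide)
  also have "\<dots> \<le> dist a b / (t - r)"
    using s by (intro divide_right_mono) (simp_all add: dist_triangle3 abs_le_iff, metis dist_commute dist_triangle2 diff_le_eq add.commute)
  finally have *: "\<bar>(t - dist x a) / (t - r) - (t - dist x b) / (t - r)\<bar> \<le> dist a b / (t - r)" .
  show ?thesis
    unfolding cutoff_eq[OF assms]
    using clamp_lip[of "(t - dist x a) / (t - r)" "(t - dist x b) / (t - r)"] * by linarith
qed

lemma cutoff_bounds:
  assumes "r < t"
  shows "0 \<le> cutoff x r t z" "cutoff x r t z \<le> 1" "t \<le> dist x z \<Longrightarrow> cutoff x r t z = 0"
  unfolding cutoff_eq[OF assms] using assms by (auto simp: divide_nonpos_pos)


definition hfun :: "(real \<Rightarrow> real) \<Rightarrow> nat \<Rightarrow> real \<Rightarrow> real \<Rightarrow> real \<Rightarrow> real \<Rightarrow> real" where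
  "hfun \<phi> n \<alpha> lam s \<rho> = (if \<rho> \<le> 0 then 0 else \<phi> (max 0 (min 1 (\<rho> / s) * \<rho> powr (- \<alpha>) / lam)) / \<rho> ^ (2 * n))"

lemma hfun_nonneg:
  assumes "young_function \<phi>"
  shows "0 \<le> hfun \<phi> n \<alpha> lam s \<rho>"
  unfolding hfun_def using yf_nonneg[OF assms, of "max 0 (min 1 (\<rho> / s) * \<rho> powr (- \<alpha>) / lam)"]
  by simp

lemma integrand_le_h:
  fixes a b :: "'a::euclidean_space"
  assumes yf: "young_function \<phi>" and rt: "r < t" and lam: "lam > 0"
  shows "\<phi> (\<bar>cutoff x r t a - cutoff x r t b\<bar> / (lam * norm (a - b) powr \<alpha>)) / norm (a - b) ^ (2 * n)
      \<le> hfun \<phi> n \<alpha> lam (t - r) (norm (a - b))"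
proof (cases "a = b")
  case True
  have "\<phi> 0 = 0" using yf by (simp add: young_function_def)
  then show ?thesis using True hfun_nonneg[OF yf] by simp
next
  case False
  define \<rho> where "\<rho> = norm (a - b)"
  have \<rho>: "\<rho> > 0" using False by (simp add: \<rho>_def)
  define d where "d = \<bar>cutoff x r t a - cutoff x r t b\<bar>"
  have d: "0 \<le> d" "d \<le> min 1 (\<rho> / (t - r))"
    using cutoff_lip[OF rt, of x a b] by (simp_all add: d_def \<rho>_def dist_norm)
  have pp: "\<rho> powr \<alpha> > 0" using \<rho> by simp
  have eq: "d / (lam * \<rho> powr \<alpha>) = d * \<rho> powr (- \<alpha>) / lam"
    using pp lam by (simp add: powr_minus field_simps)
  have le: "d * \<rho> powr (- \<alpha>) / lam \<le> min 1 (\<rho> / (t - r)) * \<rho> powr (- \<alpha>) / lam"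
    using d lam by (intro divide_right_mono mult_right_mono) simp_all
  have nn: "0 \<le> d * \<rho> powr (- \<alpha>) / lam" using d lam by simp
  have "\<phi> (d / (lam * \<rho> powr \<alpha>)) \<le> \<phi> (max 0 (min 1 (\<rho> / (t - r)) * \<rho> powr (- \<alpha>) / lam))"
    unfolding eq using le nn by (intro yf_mono[OF yf]) simp_all
  then have "\<phi> (d / (lam * \<rho> powr \<alpha>)) / \<rho> ^ (2 * n) \<le> \<phi> (max 0 (min 1 (\<rho> / (t - r)) * \<rho> powr (- \<alpha>) / lam)) / \<rho> ^ (2 * n)"
    using \<rho> by (intro divide_right_mono) simp_all
  then show ?thesis using \<rho> unfolding hfun_def d_def \<rho>_def by simp
qed

lemma integrand_zero:
  fixes a b :: "'a::euclidean_space"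
  assumes yf: "young_function \<phi>" and rt: "r < t" and "a \<notin> ball x t" "b \<notin> ball x t"
  shows "\<phi> (\<bar>cutoff x r t a - cutoff x r t b\<bar> / (lam * norm (a - b) powr \<alpha>)) / norm (a - b) ^ (2 * n) = 0"
proof -
  have "cutoff x r t a = 0" "cutoff x r t b = 0"
    using assms cutoff_bounds(3)[OF rt] by (simp_all add: not_less)
  then show ?thesis using yf by (simp add: young_function_def)
qed

lemma integrand_le_ind:
  fixes a b :: "'a::euclidean_space"
  assumes yf: "young_function \<phi>" and rt: "r < t" and lam: "lam > 0"
  shows "ennreal (\<phi> (\<bar>cutoff x r t a - cutoff x r t b\<bar> / (lam * norm (a - b) powr \<alpha>)) / norm (a - b) ^ (2 * n))
      * indicator \<Omega> b * indicator \<Omega> a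
    \<le> (indicator (\<Omega> \<inter> ball x t) a + indicator (\<Omega> \<inter> ball x t) b) * ennreal (hfun \<phi> n \<alpha> lam (t - r) (norm (a - b)))"
proof (cases "a \<in> \<Omega> \<and> b \<in> \<Omega>")
  case False
  then show ?thesis by (auto simp: indicator_def)
next
  case True
  show ?thesis
  proof (cases "a \<in> ball x t \<or> b \<in> ball x t")
    case False
    have "\<phi> (\<bar>cutoff x r t a - cutoff x r t b\<bar> / (lam * norm (a - b) powr \<alpha>)) / norm (a - b) ^ (2 * n) = 0"
      by (rule integrand_zero[OF yf rt]) (use False in auto)
    then show ?thesis unfolding \<open>_ = 0\<close> by simp
  next
    case True2: True
    have "1 \<le> indicator (\<Omega> \<inter> ball x t) a + (indicator (\<Omega> \<inter> ball x t) b :: ennreal)"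
      using True True2 by (auto simp: indicator_def)
    then have "ennreal (hfun \<phi> n \<alpha> lam (t - r) (norm (a - b))) \<le>
      (indicator (\<Omega> \<inter> ball x t) a + indicator (\<Omega> \<inter> ball x t) b) * ennreal (hfun \<phi> n \<alpha> lam (t - r) (norm (a - b)))"
      using mult_right_mono[of 1 _ "ennreal (hfun \<phi> n \<alpha> lam (t - r) (norm (a - b)))"] by simp
    moreover have "ennreal (\<phi> (\<bar>cutoff x r t a - cutoff x r t b\<bar> / (lam * norm (a - b) powr \<alpha>)) / norm (a - b) ^ (2 * n))
      \<le> ennreal (hfun \<phi> n \<alpha> lam (t - r) (norm (a - b)))"
      by (rule ennreal_leI[OF integrand_le_h[OF yf rt lam]])
    ultimately show ?thesis using True by simp
  qed
qed


lemma phi'_meas: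
  assumes "young_function \<phi>"
  shows "(\<lambda>x. \<phi> (max 0 x)) \<in> borel_measurable borel"
proof -
  have ct: "continuous_on {0..} \<phi>" using assms unfolding young_function_def by blast
  have "continuous_on UNIV (\<lambda>x::real. \<phi> (max 0 x))"
    by (rule continuous_on_compose2[OF ct]) (auto intro!: continuous_intros)
  then show ?thesis by (rule borel_measurable_continuous_onI)
qed

lemma phi_comp_meas:
  assumes "young_function \<phi>" "g \<in> borel_measurable M" "\<And>x. 0 \<le> g x"
  shows "(\<lambda>x. \<phi> (g x)) \<in> borel_measurable M"
proof -
  have "(\<lambda>x. \<phi> (max 0 (g x))) \<in> borel_measurable M"
    using measurable_compose[OF assms(2) phi'_meas[OF assms(1)]] by simp
  moreover have "(\<lambda>x. \<phi> (max 0 (g x))) = (\<lambda>x. \<phi> (g x))"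
    using assms(3) by (simp add: max_absorb2)
  ultimately show ?thesis by simp
qed

lemma affine_le:
  fixes f g :: "real \<Rightarrow> ennreal"
  assumes [measurable]: "f \<in> borel_measurable borel" and s: "s > 0"
    and le: "\<And>\<tau>. ennreal s * f (s * \<tau>) \<le> g \<tau>"
  shows "(\<integral>\<^sup>+\<rho>. f \<rho> \<partial>lborel) \<le> (\<integral>\<^sup>+\<tau>. g \<tau> \<partial>lborel)"
proof -
  have "(\<integral>\<^sup>+\<rho>. f \<rho> \<partial>lborel) = ennreal \<bar>s\<bar> * (\<integral>\<^sup>+x. f (0 + s * x) \<partial>lborel)"
    using s by (intro nn_integral_real_affine) auto
  also have "\<dots> = (\<integral>\<^sup>+x. ennreal s * f (s * x) \<partial>lborel)"
    using s by (subst nn_integral_cmult) auto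
  also have "\<dots> \<le> (\<integral>\<^sup>+\<tau>. g \<tau> \<partial>lborel)"
    by (intro nn_integral_mono le)
  finally show ?thesis .
qed

lemma real_id_lower:
  fixes s lam \<tau> \<alpha> :: real
  assumes s: "s > 0" and lam: "lam > 0" and \<tau>: "0 < \<tau>" "\<tau> \<le> 1" and pX: "\<phi> (s powr (- \<alpha>) / lam) > 0"
  shows "s * (\<phi> (max 0 (min 1 (s * \<tau> / s) * (s * \<tau>) powr (- \<alpha>) / lam)) / (s * \<tau>) ^ (n + 1))
    = \<phi> (s powr (- \<alpha>) / lam) / s ^ n * (\<phi> (\<tau> powr (1 - \<alpha>) * (s powr (- \<alpha>) / lam)) / \<phi> (s powr (- \<alpha>) / lam) / \<tau> ^ (n + 1))"
proof -
  have m: "min 1 (s * \<tau> / s) = \<tau>" using s \<tau> by simp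
  have pw: "(s * \<tau>) powr (- \<alpha>) = s powr (- \<alpha>) * \<tau> powr (- \<alpha>)"
    using s \<tau> by (simp add: powr_mult)
  have pw2: "\<tau> powr (1 - \<alpha>) = \<tau> * \<tau> powr (- \<alpha>)"
    using \<tau> powr_add[of \<tau> 1 "- \<alpha>"] by simp
  have arg: "\<tau> * (s powr (- \<alpha>) * \<tau> powr (- \<alpha>)) / lam = \<tau> powr (1 - \<alpha>) * (s powr (- \<alpha>) / lam)"
    unfolding pw2 by simp
  have nn: "0 \<le> \<tau> powr (1 - \<alpha>) * (s powr (- \<alpha>) / lam)" using lam by simp
  have "max 0 (min 1 (s * \<tau> / s) * (s * \<tau>) powr (- \<alpha>) / lam) = \<tau> powr (1 - \<alpha>) * (s powr (- \<alpha>) / lam)"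
    unfolding m pw arg using nn by simp
  then show ?thesis
    using s \<tau> pX by (simp add: field_simps power_mult_distrib)
qed

lemma real_id_upper:
  fixes s lam \<tau> \<alpha> :: real
  assumes s: "s > 0" and lam: "lam > 0" and \<tau>: "1 \<le> \<tau>" and pX: "\<phi> (s powr (- \<alpha>) / lam) > 0"
  shows "s * (\<phi> (max 0 (min 1 (s * \<tau> / s) * (s * \<tau>) powr (- \<alpha>) / lam)) / (s * \<tau>) ^ (n + 1))
    = \<phi> (s powr (- \<alpha>) / lam) / s ^ n * (\<phi> (\<tau> powr (- \<alpha>) * (s powr (- \<alpha>) / lam)) / \<phi> (s powr (- \<alpha>) / lam) / \<tau> ^ (n + 1))"
proof -
  have m: "min 1 (s * \<tau> / s) = 1" using s \<tau> by simp
  have pw: "(s * \<tau>) powr (- \<alpha>) = s powr (- \<alpha>) * \<tau> powr (- \<alpha>)"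
    using s \<tau> by (simp add: powr_mult)
  have nn: "0 \<le> \<tau> powr (- \<alpha>) * (s powr (- \<alpha>) / lam)" using lam by simp
  have "max 0 (min 1 (s * \<tau> / s) * (s * \<tau>) powr (- \<alpha>) / lam) = \<tau> powr (- \<alpha>) * (s powr (- \<alpha>) / lam)"
    unfolding m pw using nn by (simp add: mult.commute)
  then show ?thesis
    using s \<tau> pX by (simp add: field_simps power_mult_distrib)
qed



lemma part_lower:
  assumes yf: "young_function \<phi>" and s: "s > 0" and lam: "lam > 0"
    and LL: "Lambda_lower \<phi> n \<alpha> \<le> ennreal Ll"
  shows "(\<integral>\<^sup>+\<rho>. ennreal (\<phi> (max 0 (min 1 (\<rho> / s) * \<rho> powr (- \<alpha>) / lam)) / \<rho> ^ (n + 1)) * indicator {0<..<s} \<rho> \<partial>lborel)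
    \<le> ennreal (\<phi> (s powr (- \<alpha>) / lam) / s ^ n * Ll)"
proof -
  define X where "X = s powr (- \<alpha>) / lam"
  have X: "X > 0" using s lam by (simp add: X_def)
  have pX: "\<phi> X > 0" using yf X by (simp add: young_function_def)
  define G where "G \<tau> = ennreal (\<phi> (\<tau> powr (1 - \<alpha>) * X) / \<phi> X / \<tau> ^ (n + 1)) * indicator {0<..1} \<tau>" for \<tau>
  have [measurable]: "(\<lambda>x. \<phi> (max 0 x)) \<in> borel_measurable borel" by (rule phi'_meas[OF yf])
  have [measurable]: "(\<lambda>\<tau>. \<phi> (\<tau> powr (1 - \<alpha>) * X)) \<in> borel_measurable borel"
    by (rule phi_comp_meas[OF yf]) (use X in auto)
  have Gm: "G \<in> borel_measurable lborel" unfolding G_def by measurable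
  have "(\<integral>\<^sup>+\<rho>. ennreal (\<phi> (max 0 (min 1 (\<rho> / s) * \<rho> powr (- \<alpha>) / lam)) / \<rho> ^ (n + 1)) * indicator {0<..<s} \<rho> \<partial>lborel)
     \<le> (\<integral>\<^sup>+\<tau>. ennreal (\<phi> X / s ^ n) * G \<tau> \<partial>lborel)"
  proof (rule affine_le[OF _ s])
    show "(\<lambda>\<rho>. ennreal (\<phi> (max 0 (min 1 (\<rho> / s) * \<rho> powr (- \<alpha>) / lam)) / \<rho> ^ (n + 1)) * indicator {0<..<s} \<rho>) \<in> borel_measurable borel"
      by measurable
  next
    fix \<tau> :: real
    show "ennreal s * (ennreal (\<phi> (max 0 (min 1 (s * \<tau> / s) * (s * \<tau>) powr (- \<alpha>) / lam)) / (s * \<tau>) ^ (n + 1)) * indicator {0<..<s} (s * \<tau>))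
       \<le> ennreal (\<phi> X / s ^ n) * G \<tau>"
    proof (cases "0 < \<tau> \<and> \<tau> < 1")
      case True
      then have i1: "indicator {0<..<s} (s * \<tau>) = (1::ennreal)" using s by (simp add: indicator_def)
      have i2: "indicator {0<..1} \<tau> = (1::ennreal)" using True by (simp add: indicator_def)
      have nn1: "0 \<le> \<phi> (max 0 (min 1 (s * \<tau> / s) * (s * \<tau>) powr (- \<alpha>) / lam)) / (s * \<tau>) ^ (n + 1)"
        using yf_nonneg[OF yf] True s by simp
      have nn2: "0 \<le> \<phi> (\<tau> powr (1 - \<alpha>) * X) / \<phi> X / \<tau> ^ (n + 1)"
        using yf_nonneg[OF yf, of "\<tau> powr (1 - \<alpha>) * X"] X pX True by simp
      have "ennreal s * ennreal (\<phi> (max 0 (min 1 (s * \<tau> / s) * (s * \<tau>) powr (- \<alpha>) / lam)) / (s * \<tau>) ^ (n + 1))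
         = ennreal (s * (\<phi> (max 0 (min 1 (s * \<tau> / s) * (s * \<tau>) powr (- \<alpha>) / lam)) / (s * \<tau>) ^ (n + 1)))"
        using s by (intro ennreal_mult[symmetric, OF _ nn1]) simp
      also have "\<dots> = ennreal (\<phi> X / s ^ n * (\<phi> (\<tau> powr (1 - \<alpha>) * X) / \<phi> X / \<tau> ^ (n + 1)))"
        unfolding X_def by (subst real_id_lower[OF s lam]) (use True pX X_def in auto)
      also have "\<dots> = ennreal (\<phi> X / s ^ n) * ennreal (\<phi> (\<tau> powr (1 - \<alpha>) * X) / \<phi> X / \<tau> ^ (n + 1))"
        using pX s by (intro ennreal_mult[OF _ nn2]) simp
      finally show ?thesis unfolding G_def i1 i2 by simp
    next
      case False
      then have "indicator {0<..<s} (s * \<tau>) = (0::ennreal)"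
        using s by (auto simp: indicator_def zero_less_mult_iff)
      then show ?thesis by simp
    qed
  qed
  also have "\<dots> = ennreal (\<phi> X / s ^ n) * (\<integral>\<^sup>+\<tau>. G \<tau> \<partial>lborel)"
    by (rule nn_integral_cmult[OF Gm])
  also have "(\<integral>\<^sup>+\<tau>. G \<tau> \<partial>lborel) \<le> Lambda_lower \<phi> n \<alpha>"
    unfolding Lambda_lower_def G_def using X by (intro SUP_upper2[where i=X]) auto
  also have "\<dots> \<le> ennreal Ll" by (rule LL)
  finally have "(\<integral>\<^sup>+\<rho>. ennreal (\<phi> (max 0 (min 1 (\<rho> / s) * \<rho> powr (- \<alpha>) / lam)) / \<rho> ^ (n + 1)) * indicator {0<..<s} \<rho> \<partial>lborel)
    \<le> ennreal (\<phi> X / s ^ n) * ennreal Ll" by (simp add: mult_left_mono)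
  moreover have "ennreal (\<phi> X / s ^ n) * ennreal Ll = ennreal (\<phi> X / s ^ n * Ll)"
    using pX s by (intro ennreal_mult'[symmetric]) simp
  ultimately show ?thesis by (simp add: X_def)
qed

lemma part_upper:
  assumes yf: "young_function \<phi>" and s: "s > 0" and lam: "lam > 0"
    and LU: "Lambda_upper \<phi> n \<alpha> \<le> ennreal Lu"
  shows "(\<integral>\<^sup>+\<rho>. ennreal (\<phi> (max 0 (min 1 (\<rho> / s) * \<rho> powr (- \<alpha>) / lam)) / \<rho> ^ (n + 1)) * indicator {s..} \<rho> \<partial>lborel)
    \<le> ennreal (\<phi> (s powr (- \<alpha>) / lam) / s ^ n * Lu)"
proof -
  define X where "X = s powr (- \<alpha>) / lam"
  have X: "X > 0" using s lam by (simp add: X_def)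
  have pX: "\<phi> X > 0" using yf X by (simp add: young_function_def)
  define G where "G \<tau> = ennreal (\<phi> (\<tau> powr (- \<alpha>) * X) / \<phi> X / \<tau> ^ (n + 1)) * indicator {1..} \<tau>" for \<tau>
  have [measurable]: "(\<lambda>x. \<phi> (max 0 x)) \<in> borel_measurable borel" by (rule phi'_meas[OF yf])
  have [measurable]: "(\<lambda>\<tau>. \<phi> (\<tau> powr (- \<alpha>) * X)) \<in> borel_measurable borel"
    by (rule phi_comp_meas[OF yf]) (use X in auto)
  have Gm: "G \<in> borel_measurable lborel" unfolding G_def by measurable
  have "(\<integral>\<^sup>+\<rho>. ennreal (\<phi> (max 0 (min 1 (\<rho> / s) * \<rho> powr (- \<alpha>) / lam)) / \<rho> ^ (n + 1)) * indicator {s..} \<rho> \<partial>lborel)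
     \<le> (\<integral>\<^sup>+\<tau>. ennreal (\<phi> X / s ^ n) * G \<tau> \<partial>lborel)"
  proof (rule affine_le[OF _ s])
    show "(\<lambda>\<rho>. ennreal (\<phi> (max 0 (min 1 (\<rho> / s) * \<rho> powr (- \<alpha>) / lam)) / \<rho> ^ (n + 1)) * indicator {s..} \<rho>) \<in> borel_measurable borel"
      by measurable
  next
    fix \<tau> :: real
    show "ennreal s * (ennreal (\<phi> (max 0 (min 1 (s * \<tau> / s) * (s * \<tau>) powr (- \<alpha>) / lam)) / (s * \<tau>) ^ (n + 1)) * indicator {s..} (s * \<tau>))
       \<le> ennreal (\<phi> X / s ^ n) * G \<tau>"
    proof (cases "1 \<le> \<tau>")
      case True
      then have "s * 1 \<le> s * \<tau>" using s by (intro mult_left_mono) auto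
      then have i1: "indicator {s..} (s * \<tau>) = (1::ennreal)" by (simp add: indicator_def)
      have i2: "indicator {1..} \<tau> = (1::ennreal)" using True by (simp add: indicator_def)
      have nn1: "0 \<le> \<phi> (max 0 (min 1 (s * \<tau> / s) * (s * \<tau>) powr (- \<alpha>) / lam)) / (s * \<tau>) ^ (n + 1)"
        using yf_nonneg[OF yf] True s by simp
      have nn2: "0 \<le> \<phi> (\<tau> powr (- \<alpha>) * X) / \<phi> X / \<tau> ^ (n + 1)"
        using yf_nonneg[OF yf, of "\<tau> powr (- \<alpha>) * X"] X pX True by simp
      have "ennreal s * ennreal (\<phi> (max 0 (min 1 (s * \<tau> / s) * (s * \<tau>) powr (- \<alpha>) / lam)) / (s * \<tau>) ^ (n + 1))
         = ennreal (s * (\<phi> (max 0 (min 1 (s * \<tau> / s) * (s * \<tau>) powr (- \<alpha>) / lam)) / (s * \<tau>) ^ (n + 1)))"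
        using s by (intro ennreal_mult[symmetric, OF _ nn1]) simp
      also have "\<dots> = ennreal (\<phi> X / s ^ n * (\<phi> (\<tau> powr (- \<alpha>) * X) / \<phi> X / \<tau> ^ (n + 1)))"
        unfolding X_def by (subst real_id_upper[OF s lam]) (use True pX X_def in auto)
      also have "\<dots> = ennreal (\<phi> X / s ^ n) * ennreal (\<phi> (\<tau> powr (- \<alpha>) * X) / \<phi> X / \<tau> ^ (n + 1))"
        using pX s by (intro ennreal_mult[OF _ nn2]) simp
      finally show ?thesis unfolding G_def i1 i2 by simp
    next
      case False
      then have "s * \<tau> < s * 1" using s by (intro mult_strict_left_mono) auto
      then have "indicator {s..} (s * \<tau>) = (0::ennreal)"
        by (simp add: indicator_def)
      then show ?thesis by simp
    qed
  qed
  also have "\<dots> = ennreal (\<phi> X / s ^ n) * (\<integral>\<^sup>+\<tau>. G \<tau> \<partial>lborel)"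
    by (rule nn_integral_cmult[OF Gm])
  also have "(\<integral>\<^sup>+\<tau>. G \<tau> \<partial>lborel) \<le> Lambda_upper \<phi> n \<alpha>"
    unfolding Lambda_upper_def G_def using X by (intro SUP_upper2[where i=X]) auto
  also have "\<dots> \<le> ennreal Lu" by (rule LU)
  finally have "(\<integral>\<^sup>+\<rho>. ennreal (\<phi> (max 0 (min 1 (\<rho> / s) * \<rho> powr (- \<alpha>) / lam)) / \<rho> ^ (n + 1)) * indicator {s..} \<rho> \<partial>lborel)
    \<le> ennreal (\<phi> X / s ^ n) * ennreal Lu" by (simp add: mult_left_mono)
  moreover have "ennreal (\<phi> X / s ^ n) * ennreal Lu = ennreal (\<phi> X / s ^ n * Lu)"
    using pX s by (intro ennreal_mult'[symmetric]) simp
  ultimately show ?thesis by (simp add: X_def)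
qed


lemma upper_pointwise:
  assumes yf: "young_function \<phi>" and a: "\<alpha> < 0" and \<tau>: "1 \<le> \<tau>" and x: "x > 0"
    and LU: "Lambda_upper \<phi> n \<alpha> \<le> ennreal Lu" and Lu0: "0 \<le> Lu"
  shows "\<phi> (\<tau> powr (- \<alpha>) * x) \<le> 2 ^ (n + 1) * Lu * \<tau> ^ n * \<phi> x"
proof -
  have px: "\<phi> x > 0" using yf x by (simp add: young_function_def)
  define c where "c = \<phi> (\<tau> powr (- \<alpha>) * x) / \<phi> x / (2 * \<tau>) ^ (n + 1)"
  have c0: "c \<ge> 0" unfolding c_def using px \<tau> yf_nonneg[OF yf, of "\<tau> powr (- \<alpha>) * x"] x by simp
  have "ennreal (c * \<tau>) = (\<integral>\<^sup>+t. ennreal c * indicator {\<tau>..2*\<tau>} t \<partial>lborel)"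
    using \<tau> c0 by (simp add: nn_integral_cmult_indicator ennreal_mult)
  also have "\<dots> \<le> (\<integral>\<^sup>+t. ennreal (\<phi> (t powr (- \<alpha>) * x) / \<phi> x / t ^ (n + 1)) * indicator {1..} t \<partial>lborel)"
  proof (rule nn_integral_mono)
    fix t :: real
    show "ennreal c * indicator {\<tau>..2*\<tau>} t \<le> ennreal (\<phi> (t powr (- \<alpha>) * x) / \<phi> x / t ^ (n + 1)) * indicator {1..} t"
    proof (cases "\<tau> \<le> t \<and> t \<le> 2 * \<tau>")
      case True
      then have t1: "1 \<le> t" using \<tau> by simp
      have i: "indicator {\<tau>..2*\<tau>} t = (1::ennreal)" "indicator {1..} t = (1::ennreal)"
        using True t1 by (simp_all add: indicator_def)
      have pw: "\<tau> powr (- \<alpha>) \<le> t powr (- \<alpha>)" using True \<tau> a by (intro powr_mono2) auto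
      have m1: "\<phi> (\<tau> powr (- \<alpha>) * x) \<le> \<phi> (t powr (- \<alpha>) * x)"
        using pw x by (intro yf_mono[OF yf]) (simp_all add: mult_right_mono)
      have m2: "t ^ (n + 1) \<le> (2 * \<tau>) ^ (n + 1)" using True t1 by (intro power_mono) auto
      have "c \<le> \<phi> (\<tau> powr (- \<alpha>) * x) / \<phi> x / t ^ (n + 1)"
      proof -
        have "0 < (2 * \<tau>) ^ (n + 1) * t ^ (n + 1)" using t1 \<tau> by simp
        moreover have "0 \<le> \<phi> (\<tau> powr (- \<alpha>) * x) / \<phi> x"
          using px yf_nonneg[OF yf, of "\<tau> powr (- \<alpha>) * x"] x by simp
        ultimately show ?thesis unfolding c_def by (intro divide_left_mono m2)
      qed
      also have "\<dots> \<le> \<phi> (t powr (- \<alpha>) * x) / \<phi> x / t ^ (n + 1)"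
        using m1 px t1 by (intro divide_right_mono) simp_all
      finally show ?thesis unfolding i by (simp add: ennreal_leI)
    next
      case False
      then have "indicator {\<tau>..2*\<tau>} t = (0::ennreal)" by (simp add: indicator_def)
      then show ?thesis by simp
    qed
  qed
  also have "\<dots> \<le> Lambda_upper \<phi> n \<alpha>"
    unfolding Lambda_upper_def using x by (intro SUP_upper2[where i=x]) auto
  also have "\<dots> \<le> ennreal Lu" by (rule LU)
  finally have "c * \<tau> \<le> Lu"
    using c0 \<tau> Lu0 by (subst (asm) ennreal_le_iff) auto
  then have "\<phi> (\<tau> powr (- \<alpha>) * x) / \<phi> x / (2 * \<tau>) ^ (n + 1) * \<tau> \<le> Lu" by (simp add: c_def)
  then have "\<phi> (\<tau> powr (- \<alpha>) * x) \<le> Lu * (2 * \<tau>) ^ (n + 1) / \<tau> * \<phi> x"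
    using px \<tau> by (simp add: field_simps)
  also have "Lu * (2 * \<tau>) ^ (n + 1) / \<tau> * \<phi> x = 2 ^ (n + 1) * Lu * \<tau> ^ n * \<phi> x"
    using \<tau> by (simp add: power_mult_distrib field_simps)
  finally show ?thesis .
qed


lemma N_lemma:
  fixes w :: real and n :: nat
  assumes "w \<ge> 0" "n \<ge> 1"
  shows "emeasure (density lborel (\<lambda>\<rho>. ennreal (real n * w * \<rho> ^ (n - 1)) * indicator {0..} \<rho>)) {..b}
     = ennreal (if b < 0 then 0 else w * b ^ n)"
proof -
  have "emeasure (density lborel (\<lambda>\<rho>. ennreal (real n * w * \<rho> ^ (n - 1)) * indicator {0..} \<rho>)) {..b}
     = (\<integral>\<^sup>+\<rho>. ennreal (real n * w * \<rho> ^ (n - 1)) * indicator {0..} \<rho> * indicator {..b} \<rho> \<partial>lborel)"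
    by (rule emeasure_density) measurable
  also have "\<dots> = (\<integral>\<^sup>+\<rho>. ennreal (real n * w * \<rho> ^ (n - 1)) * indicator {0..b} \<rho> \<partial>lborel)"
    by (intro nn_integral_cong) (auto split: split_indicator)
  also have "\<dots> = ennreal (if b < 0 then 0 else w * b ^ n)"
  proof (cases "b < 0")
    case True
    then have "(\<lambda>\<rho>. ennreal (real n * w * \<rho> ^ (n - 1)) * indicator {0..b} \<rho>) = (\<lambda>_. 0)"
      by (auto simp: fun_eq_iff)
    then show ?thesis using True by simp
  next
    case False
    have "(\<integral>\<^sup>+\<rho>. ennreal (real n * w * \<rho> ^ (n - 1)) * indicator {0..b} \<rho> \<partial>lborel) = ennreal (w * b ^ n - w * 0 ^ n)"
    proof (rule nn_integral_FTC_Icc)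
      show "(\<lambda>x. real n * w * x ^ (n - 1)) \<in> borel_measurable borel"
        by (intro borel_measurable_continuous_onI continuous_intros)
      show "0 \<le> b" using False by simp
    next
      fix x :: real
      show "((\<lambda>x. w * x ^ n) has_real_derivative real n * w * x ^ (n - 1)) (at x)"
        by (auto intro!: derivative_eq_intros)
      show "0 \<le> real n * w * x ^ (n - 1)" if "x \<in> {0..b}" using that assms by auto
    qed
    moreover have "(0::real) ^ n = 0" using assms by simp
    ultimately show ?thesis using False by simp
  qed
  finally show ?thesis .
qed
lemma M_lemma:
  "emeasure (distr lborel borel (norm::'a::euclidean_space \<Rightarrow> real)) {..b}
    = ennreal (if b < 0 then 0 else measure lborel (ball (0::'a) 1) * b ^ DIM('a))"
proof -
  have pre: "(norm::'a \<Rightarrow> real) -` {..b} \<inter> space lborel = cball (0::'a) b" by auto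
  have "emeasure (distr lborel borel (norm::'a \<Rightarrow> real)) {..b} = emeasure lborel ((norm::'a \<Rightarrow> real) -` {..b} \<inter> space lborel)"
    using emeasure_distr[of "norm::'a \<Rightarrow> real" lborel borel "{..b}"] by simp
  also have "\<dots> = emeasure lborel (cball (0::'a) b)" by (simp only: pre)
  also have "\<dots> = ennreal (measure lborel (cball (0::'a) b))"
    using emeasure_lborel_cball_finite[of "0::'a" b]
    by (simp add: emeasure_eq_ennreal_measure)
  also have "measure lborel (cball (0::'a) b) = (if b < 0 then 0 else measure lborel (ball (0::'a) 1) * b ^ DIM('a))"
  proof (cases "b < 0")
    case True then show ?thesis by simp
  next
    case False
    have "measure lborel (cball (0::'a) b) = measure lborel (ball (0::'a) b)"
      by (rule content_cball_conv_ball)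
    also have "\<dots> = b ^ DIM('a) * measure lborel (ball (0::'a) 1)"
      by (rule content_ball_conv_unit_ball) (use False in simp)
    finally show ?thesis using False by simp
  qed
  finally show ?thesis .
qed
lemma distr_norm_eq: "distr lborel borel (norm :: 'a::euclidean_space \<Rightarrow> real) = density lborel (\<lambda>\<rho>. ennreal (DIM('a) * measure lborel (ball (0::'a) 1) * \<rho> ^ (DIM('a) - 1)) * indicator {0..} \<rho>)"
  (is "?M = ?N")
proof (rule measure_eqI_generator_eq_countable[where E="range atMost" and \<Omega>=UNIV and A="range (\<lambda>k::nat. {..real k})"])
  show "Int_stable (range atMost :: real set set)"
  proof (rule Int_stableI)
    fix a b :: "real set" assume "a \<in> range atMost" "b \<in> range atMost"
    then obtain x y where "a = {..x}" "b = {..y}" by auto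
    then have "a \<inter> b = atMost (min x y)" by simp
    then show "a \<inter> b \<in> range atMost" by (metis rangeI)
  qed
  show "range atMost \<subseteq> Pow (UNIV :: real set)" by auto
  have sg: "sets (borel :: real measure) = sigma_sets UNIV (range atMost)"
    by (subst borel_eq_atMost) (simp add: atMost_def)
  show "sets ?M = sigma_sets UNIV (range atMost)" "sets ?N = sigma_sets UNIV (range atMost)"
    using sg by auto
  have M: "emeasure ?M {..b} = ennreal (if b < 0 then 0 else measure lborel (ball (0::'a) 1) * b ^ DIM('a))" for b
    by (rule M_lemma)
  have N: "emeasure ?N {..b} = ennreal (if b < 0 then 0 else measure lborel (ball (0::'a) 1) * b ^ DIM('a))" for b
    by (rule N_lemma[OF measure_nonneg]) (simp add: Suc_le_eq)
  show "emeasure ?M X = emeasure ?N X" if "X \<in> range atMost" for X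
    using that M N by auto
  show "range (\<lambda>k::nat. {..real k}) \<subseteq> range atMost" by auto
  show "\<Union> (range (\<lambda>k::nat. {..real k})) = UNIV"
    by (auto intro: real_arch_simple)
  show "countable (range (\<lambda>k::nat. {..real k}))" by auto
  show "emeasure ?M a \<noteq> \<infinity>" if "a \<in> range (\<lambda>k::nat. {..real k})" for a
    using that M by auto
qed
lemma radial:
  fixes g :: "real \<Rightarrow> ennreal"
  assumes [measurable]: "g \<in> borel_measurable borel"
  shows "(\<integral>\<^sup>+z. g (norm (z::'a::euclidean_space)) \<partial>lborel) =
    (\<integral>\<^sup>+\<rho>. ennreal (DIM('a) * measure lborel (ball (0::'a) 1) * \<rho> ^ (DIM('a) - 1)) * indicator {0..} \<rho> * g \<rho> \<partial>lborel)"
proof -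
  have "(\<integral>\<^sup>+z. g (norm (z::'a)) \<partial>lborel) = (\<integral>\<^sup>+\<rho>. g \<rho> \<partial>distr lborel borel (norm :: 'a \<Rightarrow> real))"
    by (subst nn_integral_distr) auto
  also have "\<dots> = (\<integral>\<^sup>+\<rho>. ennreal (DIM('a) * measure lborel (ball (0::'a) 1) * \<rho> ^ (DIM('a) - 1)) * indicator {0..} \<rho> * g \<rho> \<partial>lborel)"
    unfolding distr_norm_eq by (subst nn_integral_density) auto
  finally show ?thesis .
qed



lemma J_bound:
  fixes s lam \<alpha> :: real
  assumes yf: "young_function \<phi>" and s: "s > 0" and lam: "lam > 0"
    and LL: "Lambda_lower \<phi> DIM('a::euclidean_space) \<alpha> \<le> ennreal Ll" and Ll0: "0 \<le> Ll"
    and LU: "Lambda_upper \<phi> DIM('a) \<alpha> \<le> ennreal Lu" and Lu0: "0 \<le> Lu"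
  shows "(\<integral>\<^sup>+z. ennreal (hfun \<phi> DIM('a) \<alpha> lam s (norm (z::'a))) \<partial>lborel)
    \<le> ennreal (DIM('a) * measure lborel (ball (0::'a) 1) * (\<phi> (s powr (- \<alpha>) / lam) / s ^ DIM('a) * (Ll + Lu)))"
proof -
  define n where "n = DIM('a)"
  define w where "w = measure lborel (ball (0::'a) 1)"
  have n1: "n \<ge> 1" unfolding n_def by (simp add: Suc_le_eq)
  have w0: "w \<ge> 0" unfolding w_def by simp
  define A where "A = \<phi> (s powr (- \<alpha>) / lam) / s ^ n"
  have A0: "A \<ge> 0" unfolding A_def using yf_nonneg[OF yf, of "s powr (- \<alpha>) / lam"] s lam by simp
  define F where "F \<rho> = \<phi> (max 0 (min 1 (\<rho> / s) * \<rho> powr (- \<alpha>) / lam)) / \<rho> ^ (n + 1)" for \<rho>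
  have [measurable]: "(\<lambda>x. \<phi> (max 0 x)) \<in> borel_measurable borel" by (rule phi'_meas[OF yf])
  have hm: "(\<lambda>\<rho>. ennreal (hfun \<phi> n \<alpha> lam s \<rho>)) \<in> borel_measurable borel"
    unfolding hfun_def by measurable
  have m1: "(\<lambda>\<rho>. ennreal (F \<rho>) * indicator {0<..<s} \<rho>) \<in> borel_measurable lborel"
    unfolding F_def by measurable
  have m2: "(\<lambda>\<rho>. ennreal (F \<rho>) * indicator {s..} \<rho>) \<in> borel_measurable lborel"
    unfolding F_def by measurable
  have "(\<integral>\<^sup>+z. ennreal (hfun \<phi> n \<alpha> lam s (norm (z::'a))) \<partial>lborel)
     = (\<integral>\<^sup>+\<rho>. ennreal (n * w * \<rho> ^ (n - 1)) * indicator {0..} \<rho> * ennreal (hfun \<phi> n \<alpha> lam s \<rho>) \<partial>lborel)"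
    unfolding n_def w_def by (rule radial[OF hm[unfolded n_def]])
  also have "\<dots> = (\<integral>\<^sup>+\<rho>. ennreal (n * w) * (ennreal (F \<rho>) * indicator {0<..<s} \<rho> + ennreal (F \<rho>) * indicator {s..} \<rho>) \<partial>lborel)"
  proof (rule nn_integral_cong)
    fix \<rho> :: real
    show "ennreal (n * w * \<rho> ^ (n - 1)) * indicator {0..} \<rho> * ennreal (hfun \<phi> n \<alpha> lam s \<rho>)
      = ennreal (n * w) * (ennreal (F \<rho>) * indicator {0<..<s} \<rho> + ennreal (F \<rho>) * indicator {s..} \<rho>)"
    proof (cases "\<rho> > 0")
      case False
      then have "hfun \<phi> n \<alpha> lam s \<rho> = 0" "indicator {0<..<s} \<rho> = (0::ennreal)" "indicator {s..} \<rho> = (0::ennreal)"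
        using s by (simp_all add: hfun_def indicator_def)
      then show ?thesis by simp
    next
      case True
      have ind: "indicator {0<..<s} \<rho> + indicator {s..} \<rho> = (1::ennreal)" "indicator {0..} \<rho> = (1::ennreal)"
        using True by (simp_all add: indicator_def)
      have Fnn: "0 \<le> F \<rho>" unfolding F_def using True yf_nonneg[OF yf] by simp
      have "n * w * \<rho> ^ (n - 1) * hfun \<phi> n \<alpha> lam s \<rho> = n * w * F \<rho>"
      proof -
        have "\<rho> ^ (2 * n) = \<rho> ^ (n - 1) * \<rho> ^ (n + 1)"
        proof -
          have e: "2 * n = (n - 1) + (n + 1)" using n1 by simp
          show ?thesis by (simp only: e power_add)
        qed
        then show ?thesis using True unfolding hfun_def F_def by (simp add: field_simps)
      qed
      moreover have "0 \<le> hfun \<phi> n \<alpha> lam s \<rho>" by (rule hfun_nonneg[OF yf])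
      ultimately have "ennreal (n * w * \<rho> ^ (n - 1)) * ennreal (hfun \<phi> n \<alpha> lam s \<rho>) = ennreal (n * w) * ennreal (F \<rho>)"
        using True w0 Fnn by (simp add: ennreal_mult[symmetric])
      then show ?thesis
        by (simp add: ind(2) distrib_left[symmetric] mult.assoc ind(1)[unfolded distrib_left] ring_distribs(1)[symmetric])
    qed
  qed
  also have "\<dots> = ennreal (n * w) * ((\<integral>\<^sup>+\<rho>. ennreal (F \<rho>) * indicator {0<..<s} \<rho> \<partial>lborel) + (\<integral>\<^sup>+\<rho>. ennreal (F \<rho>) * indicator {s..} \<rho> \<partial>lborel))"
    using m1 m2 by (simp add: nn_integral_cmult nn_integral_add)
  also have "\<dots> \<le> ennreal (n * w) * (ennreal (A * Ll) + ennreal (A * Lu))"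
    unfolding F_def A_def
    by (intro mult_left_mono add_mono part_lower[OF yf s lam] part_upper[OF yf s lam])
       (use LL LU n_def in simp_all)
  also have "\<dots> = ennreal (n * w * (A * (Ll + Lu)))"
    using A0 Ll0 Lu0 w0 by (simp add: ennreal_mult[symmetric] ennreal_plus[symmetric] distrib_left del: ennreal_plus)
  finally show ?thesis unfolding n_def w_def A_def .
qed



lemma hfun_meas:
  assumes yf: "young_function \<phi>"
  shows "(\<lambda>\<rho>. hfun \<phi> n \<alpha> lam s \<rho>) \<in> borel_measurable borel"
proof -
  have [measurable]: "(\<lambda>x. \<phi> (max 0 x)) \<in> borel_measurable borel" by (rule phi'_meas[OF yf])
  show ?thesis unfolding hfun_def by measurable
qed

lemma transl_int:
  fixes H :: "'a::euclidean_space \<Rightarrow> ennreal"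
  assumes [measurable]: "H \<in> borel_measurable borel"
  shows "(\<integral>\<^sup>+b. H (c + b) \<partial>lborel) = (\<integral>\<^sup>+z. H z \<partial>lborel)"
proof -
  have "(\<integral>\<^sup>+z. H z \<partial>lborel) = (\<integral>\<^sup>+z. H z \<partial>distr lborel borel ((+) c))"
    by (simp add: lborel_distr_plus)
  also have "\<dots> = (\<integral>\<^sup>+b. H (c + b) \<partial>lborel)"
    by (subst nn_integral_distr) auto
  finally show ?thesis by simp
qed

lemma besov_mod_bound:
  fixes \<Omega> :: "'a::euclidean_space set" and x0 :: 'a
  assumes yf: "young_function \<phi>" and rt: "r < t" and lam: "lam > 0"
    and \<Omega>m[measurable]: "\<Omega> \<in> sets lborel"
    and mB: "emeasure lborel (\<Omega> \<inter> ball x0 t) = ennreal m"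
    and Jb: "(\<integral>\<^sup>+z. ennreal (hfun \<phi> DIM('a) \<alpha> lam (t - r) (norm (z::'a))) \<partial>lborel) \<le> ennreal Jv"
    and m0: "0 \<le> m" and Jv0: "0 \<le> Jv"
  shows "besov_modular \<Omega> \<alpha> \<phi> (cutoff x0 r t) lam \<le> ennreal (2 * m * Jv)"
proof -
  define B where "B = \<Omega> \<inter> ball x0 t"
  have Bm[measurable]: "B \<in> sets lborel" unfolding B_def by measurable
  define H where "H z = ennreal (hfun \<phi> DIM('a) \<alpha> lam (t - r) (norm (z::'a)))" for z
  have [measurable]: "(\<lambda>\<rho>. hfun \<phi> DIM('a) \<alpha> lam (t - r) \<rho>) \<in> borel_measurable borel"
    by (rule hfun_meas[OF yf])
  have Hm[measurable]: "H \<in> borel_measurable borel" unfolding H_def by measurable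
  define J where "J = (\<integral>\<^sup>+z. H z \<partial>lborel)"
  have HJ1: "(\<integral>\<^sup>+b. H (a - b) \<partial>lborel) = J" for a
  proof -
    have "(\<integral>\<^sup>+b. H (a - b) \<partial>lborel) = (\<integral>\<^sup>+b. H (- a + b) \<partial>lborel)"
      by (intro nn_integral_cong) (simp add: H_def norm_minus_commute)
    also have "\<dots> = J" unfolding J_def by (rule transl_int[OF Hm])
    finally show ?thesis .
  qed
  have HJ2: "(\<integral>\<^sup>+a. H (a - b) \<partial>lborel) = J" for b
  proof -
    have "(\<integral>\<^sup>+a. H (a - b) \<partial>lborel) = (\<integral>\<^sup>+a. H (- b + a) \<partial>lborel)"
      by (intro nn_integral_cong) simp
    also have "\<dots> = J" unfolding J_def by (rule transl_int[OF Hm])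
    finally show ?thesis .
  qed
  have intB: "(\<integral>\<^sup>+a. indicator B a \<partial>lborel) = ennreal m"
    using nn_integral_indicator[OF Bm] mB by (simp add: B_def)
  have "besov_modular \<Omega> \<alpha> \<phi> (cutoff x0 r t) lam
      \<le> (\<integral>\<^sup>+a. (\<integral>\<^sup>+b. (indicator B a + indicator B b) * H (a - b) \<partial>lborel) \<partial>lborel)"
    unfolding besov_modular_def
  proof (rule nn_integral_mono)
    fix a :: 'a
    show "(\<integral>\<^sup>+b. ennreal (\<phi> (\<bar>cutoff x0 r t a - cutoff x0 r t b\<bar> / (lam * norm (a - b) powr \<alpha>)) / norm (a - b) ^ (2 * DIM('a))) * indicator \<Omega> b \<partial>lborel) * indicator \<Omega> a
      \<le> (\<integral>\<^sup>+b. (indicator B a + indicator B b) * H (a - b) \<partial>lborel)"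
    proof (cases "a \<in> \<Omega>")
      case False
      then show ?thesis by simp
    next
      case True
      have "(\<integral>\<^sup>+b. ennreal (\<phi> (\<bar>cutoff x0 r t a - cutoff x0 r t b\<bar> / (lam * norm (a - b) powr \<alpha>)) / norm (a - b) ^ (2 * DIM('a))) * indicator \<Omega> b \<partial>lborel)
        \<le> (\<integral>\<^sup>+b. (indicator B a + indicator B b) * H (a - b) \<partial>lborel)"
      proof (rule nn_integral_mono)
        fix b :: 'a
        show "ennreal (\<phi> (\<bar>cutoff x0 r t a - cutoff x0 r t b\<bar> / (lam * norm (a - b) powr \<alpha>)) / norm (a - b) ^ (2 * DIM('a))) * indicator \<Omega> b
          \<le> (indicator B a + indicator B b) * H (a - b)"
          using integrand_le_ind[OF yf rt lam, of x0 a b \<alpha> "DIM('a)" \<Omega>] True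
          by (simp add: B_def H_def)
      qed
      then show ?thesis using True by simp
    qed
  qed
  also have "\<dots> = (\<integral>\<^sup>+a. indicator B a * J + (\<integral>\<^sup>+b. indicator B b * H (a - b) \<partial>lborel) \<partial>lborel)"
  proof (rule nn_integral_cong)
    fix a :: 'a
    have "(\<integral>\<^sup>+b. (indicator B a + indicator B b) * H (a - b) \<partial>lborel)
       = (\<integral>\<^sup>+b. indicator B a * H (a - b) + indicator B b * H (a - b) \<partial>lborel)"
      by (simp add: distrib_right)
    also have "\<dots> = (\<integral>\<^sup>+b. indicator B a * H (a - b) \<partial>lborel) + (\<integral>\<^sup>+b. indicator B b * H (a - b) \<partial>lborel)"
      by (rule nn_integral_add) measurable
    also have "(\<integral>\<^sup>+b. indicator B a * H (a - b) \<partial>lborel) = indicator B a * J"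
      by (subst nn_integral_cmult) (measurable, simp add: HJ1)
    finally show "(\<integral>\<^sup>+b. (indicator B a + indicator B b) * H (a - b) \<partial>lborel)
       = indicator B a * J + (\<integral>\<^sup>+b. indicator B b * H (a - b) \<partial>lborel)" .
  qed
  also have "\<dots> = (\<integral>\<^sup>+a. indicator B a * J \<partial>lborel) + (\<integral>\<^sup>+a. (\<integral>\<^sup>+b. indicator B b * H (a - b) \<partial>lborel) \<partial>lborel)"
    by (rule nn_integral_add) measurable
  also have "(\<integral>\<^sup>+a. indicator B a * J \<partial>lborel) = ennreal m * J"
    by (subst nn_integral_multc) (measurable, simp add: intB)
  also have "(\<integral>\<^sup>+a. (\<integral>\<^sup>+b. indicator B b * H (a - b) \<partial>lborel) \<partial>lborel)
     = (\<integral>\<^sup>+b. (\<integral>\<^sup>+a. indicator B b * H (a - b) \<partial>lborel) \<partial>lborel)"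
    by (rule lborel_pair.Fubini'[symmetric]) measurable
  also have "\<dots> = (\<integral>\<^sup>+b. indicator B b * J \<partial>lborel)"
    by (intro nn_integral_cong, subst nn_integral_cmult) (measurable, simp add: HJ2)
  also have "\<dots> = ennreal m * J"
    by (subst nn_integral_multc) (measurable, simp add: intB)
  also have "ennreal m * J + ennreal m * J \<le> ennreal m * ennreal Jv + ennreal m * ennreal Jv"
    using Jb unfolding J_def H_def by (intro add_mono mult_left_mono) auto
  also have "\<dots> = ennreal (2 * m * Jv)"
    using m0 Jv0 by (simp add: ennreal_mult[symmetric] ennreal_plus[symmetric] del: ennreal_plus)
  finally show ?thesis .
qed



lemma orlicz_mod_bound:
  fixes \<Omega> :: "'a::euclidean_space set" and x0 :: 'a
  assumes yf: "young_function \<phi>" and rt: "r < t" and lam: "lam > 0"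
    and \<Omega>m[measurable]: "\<Omega> \<in> sets lborel"
    and mB: "emeasure lborel (\<Omega> \<inter> ball x0 t) = ennreal m"
  shows "orlicz_modular \<Omega> \<phi> (cutoff x0 r t) lam \<le> ennreal (\<phi> (1 / lam)) * ennreal m"
proof -
  have Bm: "\<Omega> \<inter> ball x0 t \<in> sets lborel" by measurable
  have "orlicz_modular \<Omega> \<phi> (cutoff x0 r t) lam \<le> (\<integral>\<^sup>+z. ennreal (\<phi> (1 / lam)) * indicator (\<Omega> \<inter> ball x0 t) z \<partial>lborel)"
    unfolding orlicz_modular_def
  proof (rule nn_integral_mono)
    fix z :: 'a
    show "ennreal (\<phi> (\<bar>cutoff x0 r t z\<bar> / lam)) * indicator \<Omega> z \<le> ennreal (\<phi> (1 / lam)) * indicator (\<Omega> \<inter> ball x0 t) z"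
    proof (cases "z \<in> \<Omega>")
      case False then show ?thesis by simp
    next
      case True
      show ?thesis
      proof (cases "z \<in> ball x0 t")
        case True2: True
        have "\<phi> (\<bar>cutoff x0 r t z\<bar> / lam) \<le> \<phi> (1 / lam)"
          using cutoff_bounds[OF rt, of x0 z] lam by (intro yf_mono[OF yf]) (simp_all add: divide_right_mono)
        then show ?thesis using True True2 by (simp add: ennreal_leI)
      next
        case False
        then have "cutoff x0 r t z = 0" using cutoff_bounds(3)[OF rt, of x0 z] by simp
        then show ?thesis using yf by (simp add: young_function_def)
      qed
    qed
  qed
  also have "\<dots> = ennreal (\<phi> (1 / lam)) * ennreal m"
    using mB by (simp add: nn_integral_cmult_indicator[OF Bm])
  finally show ?thesis .
qed

lemma norm_le_of_mod:
  assumes "lam > 0" "orlicz_modular \<Omega> \<phi> u lam \<le> 1"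
  shows "orlicz_norm \<Omega> \<phi> u \<le> lam"
  unfolding orlicz_norm_def
  by (rule cInf_lower) (use assms in \<open>auto intro!: bdd_belowI[where m=0]\<close>)

lemma seminorm_le_of_mod:
  assumes "lam > 0" "besov_modular \<Omega> \<alpha> \<phi> u lam \<le> 1"
  shows "besov_seminorm \<Omega> \<alpha> \<phi> u \<le> lam"
  unfolding besov_seminorm_def
  by (rule cInf_lower) (use assms in \<open>auto intro!: bdd_belowI[where m=0]\<close>)



theorem lemma2p6:
  fixes \<Omega> :: "'a::euclidean_space set" and \<alpha> :: real and \<phi> :: "real \<Rightarrow> real"
  assumes "DIM('a) \<ge> 2"
    and "-real DIM('a) < \<alpha>" and "\<alpha> < 0"
    and "young_function \<phi>"
    and "Lambda_lower \<phi> DIM('a) \<alpha> < \<infinity>" and "Lambda_upper \<phi> DIM('a) \<alpha> < \<infinity>"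
    and "open \<Omega>" and "connected \<Omega>" and "\<Omega> \<noteq> {}" and "bounded \<Omega>"
  shows "\<exists>C>0. \<forall>x\<in>\<Omega>. \<forall>r t. 0 < r \<and> r < t \<and> t < diameter \<Omega> / 2 \<longrightarrow>
           cutoff x r t \<in> besov_space \<Omega> \<alpha> \<phi> \<and>
           besov_norm \<Omega> \<alpha> \<phi> (cutoff x r t)
             \<le> C * (t - r) powr (- \<alpha>) /
                phi_inv \<phi> ((t - r) ^ DIM('a) / measure lebesgue (\<Omega> \<inter> ball x t))"
proof -
  note yf = assms(4) and a0 = assms(3)
  define n where "n = DIM('a)"
  define w where "w = measure lborel (ball (0::'a) 1)"
  define D where "D = diameter \<Omega> / 2"
  define Ll where "Ll = enn2real (Lambda_lower \<phi> DIM('a) \<alpha>)"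
  define Lu where "Lu = enn2real (Lambda_upper \<phi> DIM('a) \<alpha>)"
  have LL: "Lambda_lower \<phi> DIM('a) \<alpha> \<le> ennreal Ll" using assms(5) by (simp add: Ll_def)
  have LU: "Lambda_upper \<phi> DIM('a) \<alpha> \<le> ennreal Lu" using assms(6) by (simp add: Lu_def)
  have Ll0: "0 \<le> Ll" and Lu0: "0 \<le> Lu" by (simp_all add: Ll_def Lu_def)
  have w0: "0 \<le> w" by (simp add: w_def)
  define C1 where "C1 = max 1 (max (D powr \<alpha>) (2 ^ (n + 1) * Lu * D ^ n * D powr \<alpha>))"
  define C2 where "C2 = max 1 (2 * n * w * (Ll + Lu))"
  have C1: "C1 \<ge> 1" "C1 \<ge> D powr \<alpha>" "C1 \<ge> 2 ^ (n + 1) * Lu * D ^ n * D powr \<alpha>"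
    by (simp_all add: C1_def)
  have C2: "C2 \<ge> 1" "C2 \<ge> 2 * n * w * (Ll + Lu)" by (simp_all add: C2_def)
  have \<Omega>m: "\<Omega> \<in> sets lborel" using assms(7) by simp
  show ?thesis
  proof (intro exI[of _ "C1 + C2"] conjI ballI allI impI)
    show "C1 + C2 > 0" using C1 C2 by simp
  next
    fix x r t assume x: "x \<in> \<Omega>" and rt: "0 < r \<and> r < t \<and> t < diameter \<Omega> / 2"
    define s where "s = t - r"
    have s: "s > 0" "s < D" using rt by (simp_all add: s_def D_def)
    have D: "D > 0" using s by simp
    have rt': "r < t" using rt by simp
    define m where "m = measure lebesgue (\<Omega> \<inter> ball x t)"
    have Bm: "\<Omega> \<inter> ball x t \<in> sets lborel" using assms(7) by simp
    have mlb: "m = measure lborel (\<Omega> \<inter> ball x t)" unfolding m_def using Bm by simp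
    have fin: "emeasure lborel (\<Omega> \<inter> ball x t) < \<infinity>"
      by (rule le_less_trans[OF emeasure_mono[of _ "ball x t"] emeasure_lborel_ball_finite]) auto
    have mB: "emeasure lborel (\<Omega> \<inter> ball x t) = ennreal m"
      using fin unfolding mlb by (simp add: emeasure_eq_ennreal_measure)
    have mpos: "m > 0"
    proof -
      have "open (\<Omega> \<inter> ball x t)" using assms(7) by auto
      moreover have "x \<in> \<Omega> \<inter> ball x t" using x rt by simp
      ultimately obtain e where e: "e > 0" "ball x e \<subseteq> \<Omega> \<inter> ball x t"
        by (meson open_contains_ball)
      have "emeasure lborel (ball x e) \<le> emeasure lborel (\<Omega> \<inter> ball x t)"
        by (rule emeasure_mono[OF e(2) Bm])
      moreover have "emeasure lborel (ball x e) = ennreal (measure lborel (ball x e))"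
        using emeasure_lborel_ball_finite[of x e] by (simp add: emeasure_eq_ennreal_measure)
      moreover have "measure lborel (ball x e) > 0" using e(1) by (rule content_ball_pos)
      ultimately have "ennreal (measure lborel (ball x e)) \<le> ennreal m" using mB by simp
      then have "measure lborel (ball x e) \<le> m" using mlb by (simp add: ennreal_le_iff)
      then show ?thesis using \<open>measure lborel (ball x e) > 0\<close> by linarith
    qed
    have m0: "m \<ge> 0" using mpos by simp
    define y where "y = phi_inv \<phi> (s ^ n / m)"
    have "s ^ n / m > 0" using s mpos by simp
    from phi_inv_prop[OF yf this] have y: "y > 0" "\<phi> y = s ^ n / m" by (simp_all add: y_def)
    define l0 where "l0 = s powr (- \<alpha>) / y"
    have l0: "l0 > 0" using y s by (simp add: l0_def)
    define l1 where "l1 = C1 * l0"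
    define l2 where "l2 = C2 * l0"
    have l1: "l1 > 0" using l0 C1 by (simp add: l1_def)
    have l2: "l2 > 0" using l0 C2 by (simp add: l2_def)
    have orl: "orlicz_modular \<Omega> \<phi> (cutoff x r t) l1 \<le> 1"
    proof -
      define x' where "x' = D powr \<alpha> / C1 * y"
      have x': "x' > 0" using D C1 y by (simp add: x'_def)
      have Ds: "1 \<le> D / s" using s by simp
      have DD: "D powr (- \<alpha>) * D powr \<alpha> = 1" using D by (simp add: powr_add[symmetric])
      have eq: "1 / l1 = (D / s) powr (- \<alpha>) * x'"
        unfolding l1_def l0_def x'_def using D s y C1 DD
        by (simp add: powr_divide field_simps)
      have "\<phi> (1 / l1) \<le> 2 ^ (n + 1) * Lu * (D / s) ^ n * \<phi> x'"
        unfolding eq n_def by (rule upper_pointwise[OF yf a0 Ds x' LU Lu0])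
      also have "\<phi> x' \<le> D powr \<alpha> / C1 * \<phi> y"
        unfolding x'_def using C1 D y by (intro yf_scale[OF yf]) simp_all
      finally have "\<phi> (1 / l1) \<le> 2 ^ (n + 1) * Lu * (D / s) ^ n * (D powr \<alpha> / C1 * \<phi> y)"
        using Lu0 D s by (simp add: mult_left_mono)
      then have "\<phi> (1 / l1) * m \<le> 2 ^ (n + 1) * Lu * (D / s) ^ n * (D powr \<alpha> / C1 * (s ^ n / m)) * m"
        unfolding y(2)[symmetric] by (rule mult_right_mono[OF _ m0])
      also have "\<dots> = 2 ^ (n + 1) * Lu * D ^ n * D powr \<alpha> / C1"
        using s mpos by (simp add: power_divide field_simps)
      also have "\<dots> \<le> 1" using C1 by simp
      finally have le1: "\<phi> (1 / l1) * m \<le> 1" .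
      have "orlicz_modular \<Omega> \<phi> (cutoff x r t) l1 \<le> ennreal (\<phi> (1 / l1)) * ennreal m"
        by (rule orlicz_mod_bound[OF yf rt' l1 \<Omega>m mB])
      also have "\<dots> = ennreal (\<phi> (1 / l1) * m)"
        using yf_nonneg[OF yf, of "1 / l1"] l1 m0 by (intro ennreal_mult[symmetric]) simp_all
      also have "\<dots> \<le> 1" using le1 by (simp add: ennreal_le_1)
      finally show ?thesis .
    qed
    have bes: "besov_modular \<Omega> \<alpha> \<phi> (cutoff x r t) l2 \<le> 1"
    proof -
      have sl: "s powr (- \<alpha>) / l2 = 1 / C2 * y"
        unfolding l2_def l0_def using s y C2 by (simp add: field_simps)
      define Jv where "Jv = n * w * (\<phi> (s powr (- \<alpha>) / l2) / s ^ n * (Ll + Lu))"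
      have Jv0: "Jv \<ge> 0" unfolding Jv_def using w0 Ll0 Lu0 yf_nonneg[OF yf, of "s powr (- \<alpha>) / l2"] l2 s by simp
      have Jb: "(\<integral>\<^sup>+z. ennreal (hfun \<phi> DIM('a) \<alpha> l2 (t - r) (norm (z::'a))) \<partial>lborel) \<le> ennreal Jv"
        unfolding Jv_def n_def w_def s_def
        using J_bound[OF yf _ l2 LL Ll0 LU Lu0] s by (simp add: s_def)
      have "besov_modular \<Omega> \<alpha> \<phi> (cutoff x r t) l2 \<le> ennreal (2 * m * Jv)"
        by (rule besov_mod_bound[OF yf rt' l2 \<Omega>m mB Jb m0 Jv0])
      also have "2 * m * Jv \<le> 1"
      proof -
        have ph: "\<phi> (s powr (- \<alpha>) / l2) \<le> 1 / C2 * (s ^ n / m)"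
          unfolding sl using C2 y by (subst y(2)[symmetric]) (intro yf_scale[OF yf], simp_all)
        have "2 * m * Jv \<le> 2 * m * (n * w * (1 / C2 * (s ^ n / m) / s ^ n * (Ll + Lu)))"
          unfolding Jv_def using m0 w0 Ll0 Lu0 s ph
          by (intro mult_left_mono divide_right_mono mult_right_mono) simp_all
        also have "\<dots> = 2 * n * w * (Ll + Lu) / C2"
          using mpos s C2 by (simp add: field_simps)
        also have "\<dots> \<le> 1" using C2 by simp
        finally show ?thesis .
      qed
      then have "ennreal (2 * m * Jv) \<le> 1" by (simp add: ennreal_le_1)
      finally show ?thesis .
    qed
    have meas: "cutoff x r t \<in> borel_measurable (lebesgue_on \<Omega>)"
    proof (rule continuous_imp_measurable_on_sets_lebesgue)
      have "cutoff x r t = (\<lambda>z. max 0 (min 1 ((t - dist x z) / (t - r))))"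
        by (rule ext, rule cutoff_eq[OF rt'])
      moreover have "continuous_on \<Omega> (\<lambda>z. max 0 (min 1 ((t - dist x z) / (t - r))))"
        using rt' by (intro continuous_intros) auto
      ultimately show "continuous_on \<Omega> (cutoff x r t)" by simp
      show "\<Omega> \<in> sets lebesgue" using assms(7) by simp
    qed
    show "cutoff x r t \<in> besov_space \<Omega> \<alpha> \<phi>"
      unfolding besov_space_def using meas orl bes l1 l2 by blast
    have "besov_norm \<Omega> \<alpha> \<phi> (cutoff x r t) \<le> l1 + l2"
      unfolding besov_norm_def
      by (intro add_mono norm_le_of_mod[OF l1 orl] seminorm_le_of_mod[OF l2 bes])
    also have "l1 + l2 = (C1 + C2) * (t - r) powr (- \<alpha>) / phi_inv \<phi> ((t - r) ^ DIM('a) / measure lebesgue (\<Omega> \<inter> ball x t))"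
      unfolding l1_def l2_def l0_def y_def s_def n_def m_def by (simp add: ring_distribs add_divide_distrib)
    finally show "besov_norm \<Omega> \<alpha> \<phi> (cutoff x r t)
             \<le> (C1 + C2) * (t - r) powr (- \<alpha>) /
                phi_inv \<phi> ((t - r) ^ DIM('a) / measure lebesgue (\<Omega> \<inter> ball x t))" .
  qed
qed


end
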